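(* For every integer $n\geq 4$ and every $p>1$, $$\lambda_{1,p}(P_n)>\lambda_{1,p}(P_{n+1})>\lambda_{1,p}(T_{n,3}).$$
   Context: $P_n$ denotes the path graph on $n$ vertices (its two end vertices are its boundary). For $n>i\ge 3$, the tadpole graph $T_{n,i}$ is the graph on vertices $t_1,\dots,t_n$ with edges $t_n\sim t_{n-1}\sim\cdots\sim t_i\sim t_{i-1}\sim\cdots\sim t_2\sim t_1\sim t_i$ (a cycle of length $i$ with a path attached at $t_i$). For a finite connected graph $G$, $B(G)=\{x\in V(G):\deg x=1\}$, $C_B(G)=\{f\in\mathbb{R}^{V(G)}: f|_{B(G)}\equiv0\}$, and $$\lambda_{1,p}(G)=\min_{f\in C_B(G)\setminus\{0\}}\frac{\sum_{\{x,y\}\in E(G)}|f(x)-f(y)|^p}{\sum_{x\in V(G)}|f(x)|^p}.$$ *)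

theory Defs
  imports Complex_Main
begin

text \<open>A finite graph is given by a vertex set V and a set E of edges, each undirected
edge {x,y} being listed exactly once as an ordered pair (x,y).\<close>

definition graph_deg :: "(nat \<times> nat) set \<Rightarrow> nat \<Rightarrow> nat" where
  "graph_deg E x = card {e \<in> E. fst e = x \<or> snd e = x}"

definition graph_boundary :: "nat set \<Rightarrow> (nat \<times> nat) set \<Rightarrow> nat set" where
  "graph_boundary V E = {x \<in> V. graph_deg E x = 1}"

text \<open>Rayleigh quotient of f and the first Dirichlet p-Laplacian eigenvalue
(the minimum is attained, so it coincides with the infimum).\<close>

definition rayleigh_p :: "nat set \<Rightarrow> (nat \<times> nat) set \<Rightarrow> real \<Rightarrow> (nat \<Rightarrow> real) \<Rightarrow> real" where
  "rayleigh_p V E p f =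
     (\<Sum>e\<in>E. \<bar>f (fst e) - f (snd e)\<bar> powr p) / (\<Sum>x\<in>V. \<bar>f x\<bar> powr p)"

definition lambda1p :: "nat set \<Rightarrow> (nat \<times> nat) set \<Rightarrow> real \<Rightarrow> real" where
  "lambda1p V E p = Inf {rayleigh_p V E p f | f.
      (\<forall>x\<in>graph_boundary V E. f x = 0) \<and> (\<exists>x\<in>V. f x \<noteq> 0)}"

definition path_edges :: "nat \<Rightarrow> (nat \<times> nat) set" where
  "path_edges n = {(k, k + 1) | k. 1 \<le> k \<and> k < n}"

definition lambda_path :: "real \<Rightarrow> nat \<Rightarrow> real" where
  "lambda_path p n = lambda1p {1..n} (path_edges n) p"

definition tadpole_edges :: "nat \<Rightarrow> nat \<Rightarrow> (nat \<times> nat) set" where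
  "tadpole_edges n i = path_edges n \<union> {(1, i)}"

definition lambda_tadpole :: "real \<Rightarrow> nat \<Rightarrow> nat \<Rightarrow> real" where
  "lambda_tadpole p n i = lambda1p {1..n} (tadpole_edges n i) p"

end

theory Submission
  imports Defs "HOL-Analysis.Analysis"
begin

lemma rayleigh_nonneg: "0 \<le> rayleigh_p V E p f"
  unfolding rayleigh_p_def by (intro divide_nonneg_nonneg sum_nonneg) auto

lemma lambda_le:
  assumes "\<forall>x\<in>graph_boundary V E. g x = 0" "\<exists>x\<in>V. g x \<noteq> 0"
  shows "lambda1p V E p \<le> rayleigh_p V E p g"
  unfolding lambda1p_def
  by (rule cInf_lower) (use assms rayleigh_nonneg in \<open>auto intro!: bdd_belowI[where m=0]\<close>)

lemma rayleigh_cong: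
  assumes "E \<subseteq> V \<times> V" "\<And>x. x \<in> V \<Longrightarrow> f x = g x"
  shows "rayleigh_p V E p f = rayleigh_p V E p g"
proof -
  have "(\<Sum>e\<in>E. \<bar>f (fst e) - f (snd e)\<bar> powr p) = (\<Sum>e\<in>E. \<bar>g (fst e) - g (snd e)\<bar> powr p)"
    using assms by (intro sum.cong) auto
  moreover have "(\<Sum>x\<in>V. \<bar>f x\<bar> powr p) = (\<Sum>x\<in>V. \<bar>g x\<bar> powr p)"
    using assms by (intro sum.cong) auto
  ultimately show ?thesis unfolding rayleigh_p_def by simp
qed

lemma rayleigh_scale:
  assumes "c > 0"
  shows "rayleigh_p V E p (\<lambda>x. c * f x) = rayleigh_p V E p f"
proof -
  have "(\<Sum>e\<in>E. \<bar>c * f (fst e) - c * f (snd e)\<bar> powr p) = c powr p * (\<Sum>e\<in>E. \<bar>f (fst e) - f (snd e)\<bar> powr p)"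
    unfolding sum_distrib_left
    by (intro sum.cong refl) (use assms in \<open>simp add: right_diff_distrib[symmetric] abs_mult powr_mult abs_of_pos\<close>)
  moreover have "(\<Sum>x\<in>V. \<bar>c * f x\<bar> powr p) = c powr p * (\<Sum>x\<in>V. \<bar>f x\<bar> powr p)"
    unfolding sum_distrib_left
    by (intro sum.cong refl) (use assms in \<open>simp add: abs_mult powr_mult abs_of_pos\<close>)
  moreover have "c powr p > 0" using assms by simp
  ultimately show ?thesis unfolding rayleigh_p_def by simp
qed

lemma rayleigh_abs:
  assumes "p \<ge> 0" shows "rayleigh_p V E p (\<lambda>x. \<bar>f x\<bar>) \<le> rayleigh_p V E p f"
  unfolding rayleigh_p_def abs_abs
  by (intro divide_right_mono sum_mono powr_mono2) (use assms in \<open>auto intro: sum_nonneg abs_triangle_ineq3\<close>)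

lemma attain_general:
  fixes V :: "nat set" and E and p :: real
  assumes fin: "finite V" and EV: "E \<subseteq> V \<times> V" and p: "p > 0"
    and ex: "\<exists>g::nat\<Rightarrow>real. (\<forall>x\<in>graph_boundary V E. g x = 0) \<and> (\<exists>x\<in>V. g x \<noteq> 0)"
  shows "\<exists>f. (\<forall>x. 0 \<le> f x) \<and> (\<forall>x\<in>graph_boundary V E. f x = 0) \<and> (\<exists>x\<in>V. f x \<noteq> 0) \<and>
     (\<forall>g. (\<forall>x\<in>graph_boundary V E. g x = 0) \<and> (\<exists>x\<in>V. g x \<noteq> 0) \<longrightarrow>
        rayleigh_p V E p f \<le> rayleigh_p V E p g)"
proof -
  define S where "S = (\<lambda>i::nat. if i \<in> V then {0..1::real} else {0})"
  define K where "K = Pi\<^sub>E UNIV S"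
  have "compactin (product_topology (\<lambda>i. euclidean) UNIV) K"
    unfolding K_def by (subst compactin_PiE) (auto simp: S_def)
  hence cK: "compact K" by (simp add: euclidean_product_topology)
  define K1 where "K1 = K \<inter> (\<Inter>x\<in>graph_boundary V E. {f. f x = 0}) \<inter> (\<Union>x\<in>V. {f. f x = 1})"
  have cl1: "closed (\<Inter>x\<in>graph_boundary V E. {f::nat\<Rightarrow>real. f x = 0})"
    by (intro closed_INT ballI closed_Collect_eq) auto
  have cl2: "closed (\<Union>x\<in>V. {f::nat\<Rightarrow>real. f x = 1})"
    by (intro closed_UN ballI closed_Collect_eq fin) auto
  have cK1: "compact K1" unfolding K1_def
    using cK cl1 cl2 by (metis closed_Int compact_Int_closed)
  define N where "N = (\<lambda>f::nat\<Rightarrow>real. \<Sum>e\<in>E. \<bar>f (fst e) - f (snd e)\<bar> powr p)"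
  define D where "D = (\<lambda>f::nat\<Rightarrow>real. \<Sum>x\<in>V. \<bar>f x\<bar> powr p)"
  have R: "rayleigh_p V E p f = N f / D f" for f unfolding rayleigh_p_def N_def D_def by simp
  have finE: "finite E" using EV fin finite_subset by blast
  have Dpos: "D f > 0" if "x \<in> V" "f x \<noteq> 0" for f x
  proof -
    have "\<bar>f x\<bar> powr p \<le> D f" unfolding D_def
      by (rule member_le_sum) (use that fin in auto)
    moreover have "\<bar>f x\<bar> powr p > 0" using that by simp
    ultimately show ?thesis by linarith
  qed
  have coord: "continuous_on K1 (\<lambda>f::nat\<Rightarrow>real. f i)" for i
    by (rule continuous_on_subset[OF continuous_on_product_coordinates]) simp
  have contN: "continuous_on K1 N" unfolding N_def
  proof (intro continuous_on_sum ballI)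
    fix e assume "e \<in> E"
    show "continuous_on K1 (\<lambda>f. \<bar>f (fst e) - f (snd e)\<bar> powr p)"
      by (rule continuous_on_powr') (intro continuous_on_rabs continuous_on_diff coord continuous_on_const, rule continuous_on_const, use p in simp)
  qed
  have contD: "continuous_on K1 D" unfolding D_def
  proof (intro continuous_on_sum ballI)
    fix x assume "x \<in> V"
    show "continuous_on K1 (\<lambda>f. \<bar>f x\<bar> powr p)"
      by (rule continuous_on_powr') (intro continuous_on_rabs coord, rule continuous_on_const, use p in simp)
  qed
  have D0: "\<forall>f\<in>K1. D f \<noteq> 0"
  proof
    fix f assume "f \<in> K1"
    then obtain x where "x \<in> V" "f x = 1" unfolding K1_def by blast
    then show "D f \<noteq> 0" using Dpos[of x f] by simp
  qed
  have contR: "continuous_on K1 (\<lambda>f. N f / D f)"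
    by (intro continuous_on_divide contN contD D0)
  have norm: "\<exists>g'\<in>K1. N g' / D g' \<le> rayleigh_p V E p g"
    if g: "\<forall>x\<in>graph_boundary V E. g x = 0" "\<exists>x\<in>V. g x \<noteq> 0" for g
  proof -
    define M where "M = Max ((\<lambda>x. \<bar>g x\<bar>) ` V)"
    obtain x0 where x0: "x0 \<in> V" "g x0 \<noteq> 0" using g by blast
    have Mge: "\<bar>g x\<bar> \<le> M" if "x \<in> V" for x
      unfolding M_def using that fin by (intro Max_ge) auto
    have "M \<in> (\<lambda>x. \<bar>g x\<bar>) ` V" unfolding M_def using fin x0 by (intro Max_in) auto
    then obtain x1 where x1: "x1 \<in> V" "M = \<bar>g x1\<bar>" by blast
    have Mpos: "M > 0" using Mge[OF x0(1)] x0 by linarith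
    define g' where "g' = (\<lambda>x. if x \<in> V then (1/M) * \<bar>g x\<bar> else 0)"
    have "g' \<in> K" unfolding K_def S_def g'_def using Mge Mpos
      by (auto simp: PiE_def extensional_def)
    moreover have "g' \<in> (\<Inter>x\<in>graph_boundary V E. {f. f x = 0})" using g unfolding g'_def by auto
    moreover have "g' \<in> (\<Union>x\<in>V. {f. f x = 1})" using x1 Mpos unfolding g'_def by auto
    ultimately have "g' \<in> K1" unfolding K1_def by blast
    moreover have "N g' / D g' = rayleigh_p V E p (\<lambda>x. \<bar>g x\<bar>)"
    proof -
      have "N g' / D g' = rayleigh_p V E p g'" by (simp add: R)
      also have "\<dots> = rayleigh_p V E p (\<lambda>x. (1/M) * \<bar>g x\<bar>)"
        by (rule rayleigh_cong[OF EV]) (simp add: g'_def)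
      also have "\<dots> = rayleigh_p V E p (\<lambda>x. \<bar>g x\<bar>)"
        by (rule rayleigh_scale) (use Mpos in simp)
      finally show ?thesis .
    qed
    moreover have "rayleigh_p V E p (\<lambda>x. \<bar>g x\<bar>) \<le> rayleigh_p V E p g"
      by (rule rayleigh_abs) (use p in simp)
    ultimately show ?thesis by (intro bexI[of _ g']) auto
  qed
  from ex obtain g0 :: "nat \<Rightarrow> real" where g0: "\<forall>x\<in>graph_boundary V E. g0 x = 0" "\<exists>x\<in>V. g0 x \<noteq> 0" by blast
  obtain g1 where "g1 \<in> K1" using norm[OF g0] by blast
  hence "K1 \<noteq> {}" by blast
  then obtain f where f: "f \<in> K1" "\<forall>y\<in>K1. N f / D f \<le> N y / D y"
    using continuous_attains_inf[OF cK1 \<open>K1 \<noteq> {}\<close> contR] by blast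
  show ?thesis
  proof (intro exI conjI allI impI)
    show "0 \<le> f x" for x using f(1) unfolding K1_def K_def S_def by (auto simp: PiE_def Pi_def split: if_splits)
    show "\<forall>x\<in>graph_boundary V E. f x = 0" using f(1) unfolding K1_def by blast
    show "\<exists>x\<in>V. f x \<noteq> 0" using f(1) unfolding K1_def by force
    fix g :: "nat \<Rightarrow> real" assume "(\<forall>x\<in>graph_boundary V E. g x = 0) \<and> (\<exists>x\<in>V. g x \<noteq> 0)"
    then obtain g' where "g' \<in> K1" "N g' / D g' \<le> rayleigh_p V E p g" using norm by blast
    moreover have "N f / D f \<le> N g' / D g'" using f(2) \<open>g' \<in> K1\<close> by blast
    ultimately show "rayleigh_p V E p f \<le> rayleigh_p V E p g" unfolding R by linarith
  qed
qed

definition NP :: "real \<Rightarrow> nat \<Rightarrow> (nat \<Rightarrow> real) \<Rightarrow> real" where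
  "NP p n f = (\<Sum>k\<in>{1..<n}. \<bar>f k - f (Suc k)\<bar> powr p)"
definition DV :: "real \<Rightarrow> nat \<Rightarrow> (nat \<Rightarrow> real) \<Rightarrow> real" where
  "DV p n f = (\<Sum>x\<in>{1..n}. \<bar>f x\<bar> powr p)"

lemma path_edges_eq: "path_edges n = (\<lambda>k. (k, Suc k)) ` {1..<n}"
  unfolding path_edges_def by auto

lemma finite_path_edges: "finite (path_edges n)"
  unfolding path_edges_eq by simp

lemma rayleigh_path: "rayleigh_p {1..n} (path_edges n) p f = NP p n f / DV p n f"
proof -
  have "(\<Sum>e\<in>path_edges n. \<bar>f (fst e) - f (snd e)\<bar> powr p) = NP p n f"
    unfolding path_edges_eq NP_def by (subst sum.reindex) (auto simp: inj_on_def)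
  thus ?thesis unfolding rayleigh_p_def DV_def by simp
qed

lemma rayleigh_tad: "rayleigh_p {1..n} (tadpole_edges n 3) p f = (NP p n f + \<bar>f 1 - f 3\<bar> powr p) / DV p n f"
proof -
  have nin: "(1,3) \<notin> path_edges n" unfolding path_edges_def by auto
  have "(\<Sum>e\<in>tadpole_edges n 3. \<bar>f (fst e) - f (snd e)\<bar> powr p) =
        (\<Sum>e\<in>path_edges n. \<bar>f (fst e) - f (snd e)\<bar> powr p) + \<bar>f 1 - f 3\<bar> powr p"
    unfolding tadpole_edges_def using nin finite_path_edges by (subst Un_commute) simp
  moreover have "(\<Sum>e\<in>path_edges n. \<bar>f (fst e) - f (snd e)\<bar> powr p) = NP p n f"
    unfolding path_edges_eq NP_def by (subst sum.reindex) (auto simp: inj_on_def)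
  ultimately show ?thesis unfolding rayleigh_p_def DV_def by simp
qed

lemma path_sub: "path_edges n \<subseteq> {1..n} \<times> {1..n}"
  unfolding path_edges_def by auto

lemma boundary_path:
  assumes "n \<ge> 3"
  shows "graph_boundary {1..n} (path_edges n) = {1, n}"
proof -
  have d1: "{e \<in> path_edges n. fst e = 1 \<or> snd e = 1} = {(1,2)}"
    using assms unfolding path_edges_def by auto
  have dn: "{e \<in> path_edges n. fst e = n \<or> snd e = n} = {(n-1,n)}"
    using assms unfolding path_edges_def by auto
  have dm: "{e \<in> path_edges n. fst e = x \<or> snd e = x} = {(x-1,x),(x,x+1)}" if "1 < x" "x < n" for x
    using that unfolding path_edges_def by auto
  show ?thesis
  proof (intro set_eqI iffI)
    fix x assume "x \<in> graph_boundary {1..n} (path_edges n)"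
    hence x: "x \<in> {1..n}" "graph_deg (path_edges n) x = 1" unfolding graph_boundary_def by auto
    show "x \<in> {1, n}"
    proof (rule ccontr)
      assume "x \<notin> {1, n}"
      hence "1 < x" "x < n" using x by auto
      hence "graph_deg (path_edges n) x = 2" unfolding graph_deg_def dm[OF \<open>1 < x\<close> \<open>x < n\<close>]
        by simp
      thus False using x by simp
    qed
  next
    fix x assume x: "x \<in> {1, n}"
    have "graph_deg (path_edges n) 1 = 1" unfolding graph_deg_def d1 by simp
    moreover have "graph_deg (path_edges n) n = 1" unfolding graph_deg_def dn by simp
    ultimately show "x \<in> graph_boundary {1..n} (path_edges n)"
      using assms x unfolding graph_boundary_def by auto
  qed
qed

lemma boundary_tad:
  assumes "n \<ge> 4"
  shows "graph_boundary {1..n} (tadpole_edges n 3) \<subseteq> {n}"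
proof
  fix x assume "x \<in> graph_boundary {1..n} (tadpole_edges n 3)"
  hence x: "x \<in> {1..n}" "graph_deg (tadpole_edges n 3) x = 1" unfolding graph_boundary_def by auto
  define S where "S = {e \<in> tadpole_edges n 3. fst e = x \<or> snd e = x}"
  have finS: "finite S" unfolding S_def tadpole_edges_def using finite_path_edges by auto
  show "x \<in> {n}"
  proof (rule ccontr)
    assume "x \<notin> {n}"
    hence xn: "x < n" using x by auto
    obtain a b where ab: "a \<in> S" "b \<in> S" "a \<noteq> b"
    proof (cases "x = 1")
      case True
      show ?thesis
        by (rule that[of "(1,2)" "(1,3)"]) (use True assms in \<open>auto simp: S_def tadpole_edges_def path_edges_def\<close>)
    next
      case False
      hence "x \<ge> 2" using x by auto
      show ?thesis
        by (rule that[of "(x-1,x)" "(x,x+1)"]) (use \<open>x \<ge> 2\<close> xn in \<open>auto simp: S_def tadpole_edges_def path_edges_def\<close>)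
    qed
    have "card {a, b} \<le> card S" by (rule card_mono[OF finS]) (use ab in auto)
    hence "card S \<ge> 2" using ab by simp
    thus False using x unfolding graph_deg_def S_def by simp
  qed
qed

lemma P_ub:
  assumes "n \<ge> 3" "g 1 = 0" "g n = 0" "\<exists>x\<in>{1..n}. g x \<noteq> 0"
  shows "lambda_path p n \<le> NP p n g / DV p n g"
  unfolding lambda_path_def rayleigh_path[symmetric]
  by (rule lambda_le) (use assms boundary_path[OF assms(1)] in auto)

lemma DV_pos_ex:
  assumes "DV p n h > 0" shows "\<exists>x\<in>{1..n}. h x \<noteq> 0"
proof (rule ccontr)
  assume "\<not> ?thesis"
  hence "DV p n h = 0" unfolding DV_def by (intro sum.neutral) auto
  thus False using assms by simp
qed

lemma T_ub:
  assumes "n \<ge> 4" "h n = 0" "DV p n h > 0"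
  shows "lambda_tadpole p n 3 \<le> (NP p n h + \<bar>h 1 - h 3\<bar> powr p) / DV p n h"
  unfolding lambda_tadpole_def rayleigh_tad[symmetric]
  by (rule lambda_le) (use assms boundary_tad[OF assms(1)] DV_pos_ex[OF assms(3)] in auto)

lemma P_min:
  assumes "n \<ge> 3" "p > 0"
  shows "\<exists>f. (\<forall>x. 0 \<le> f x) \<and> f 1 = 0 \<and> f n = 0 \<and> (\<exists>x\<in>{1..n}. f x \<noteq> 0) \<and>
             lambda_path p n = NP p n f / DV p n f"
proof -
  have B: "graph_boundary {1..n} (path_edges n) = {1, n}" by (rule boundary_path[OF assms(1)])
  have ex: "\<exists>g::nat\<Rightarrow>real. (\<forall>x\<in>graph_boundary {1..n} (path_edges n). g x = 0) \<and> (\<exists>x\<in>{1..n}. g x \<noteq> 0)"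
    by (rule exI[of _ "\<lambda>x. if x = 2 then 1 else 0"]) (unfold B, use assms in auto)
  obtain f where f: "\<forall>x. 0 \<le> f x" "\<forall>x\<in>graph_boundary {1..n} (path_edges n). f x = 0"
      "\<exists>x\<in>{1..n}. f x \<noteq> 0"
      "\<forall>g. (\<forall>x\<in>graph_boundary {1..n} (path_edges n). g x = 0) \<and> (\<exists>x\<in>{1..n}. g x \<noteq> 0) \<longrightarrow>
        rayleigh_p {1..n} (path_edges n) p f \<le> rayleigh_p {1..n} (path_edges n) p g"
    using attain_general[OF _ path_sub assms(2) ex] by auto
  have "lambda_path p n = rayleigh_p {1..n} (path_edges n) p f"
    unfolding lambda_path_def lambda1p_def
    by (rule cInf_eq_minimum) (use f in auto)
  hence "lambda_path p n = NP p n f / DV p n f" unfolding rayleigh_path .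
  thus ?thesis using f B by (intro exI[of _ f]) auto
qed

lemma NP_nonneg: "0 \<le> NP p n f" unfolding NP_def by (intro sum_nonneg) auto
lemma DV_nonneg: "0 \<le> DV p n f" unfolding DV_def by (intro sum_nonneg) auto

lemma NP_zero:
  assumes "f 1 = 0" "NP p n f = 0"
  shows "\<forall>k\<in>{1..n}. f k = 0"
proof -
  have t: "\<bar>f k - f (Suc k)\<bar> powr p = 0" if "k \<in> {1..<n}" for k
    using assms(2) that unfolding NP_def by (subst (asm) sum_nonneg_eq_0_iff) auto
  have "1 \<le> k \<longrightarrow> k \<le> n \<longrightarrow> f k = 0" for k
  proof (induction k)
    case 0 then show ?case by simp
  next
    case (Suc k)
    show ?case
    proof (cases "k = 0")
      case True then show ?thesis using assms(1) by simp
    next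
      case False
      show ?thesis
      proof (intro impI)
        assume "Suc k \<le> n"
        hence "k \<in> {1..<n}" using False by auto
        hence "f k = f (Suc k)" using t by simp
        moreover have "f k = 0" using Suc.IH False \<open>Suc k \<le> n\<close> by simp
        ultimately show "f (Suc k) = 0" by simp
      qed
    qed
  qed
  thus ?thesis by auto
qed

lemma NP_pos:
  assumes "f 1 = 0" "\<exists>x\<in>{1..n}. f x \<noteq> 0"
  shows "NP p n f > 0"
  using NP_zero[of f p n] assms NP_nonneg[of p n f] by force

lemma DV_pos:
  assumes "\<exists>x\<in>{1..n}. f x \<noteq> 0"
  shows "DV p n f > 0"
proof -
  obtain x where x: "x \<in> {1..n}" "f x \<noteq> 0" using assms by blast
  have "\<bar>f x\<bar> powr p \<le> DV p n f" unfolding DV_def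
    by (rule member_le_sum) (use x in auto)
  moreover have "\<bar>f x\<bar> powr p > 0" using x by simp
  ultimately show ?thesis by linarith
qed

lemma DV_lt: "DV p n f = (\<Sum>x\<in>{1..<Suc n}. \<bar>f x\<bar> powr p)"
  unfolding DV_def by (rule sum.cong) auto

lemma part1:
  assumes n: "n \<ge> 3" and p: "p > 0"
  shows "lambda_path p (Suc n) < lambda_path p n"
proof -
  obtain f where f: "\<forall>x. 0 \<le> f x" "f 1 = 0" "f n = 0" "\<exists>x\<in>{1..n}. f x \<noteq> 0"
    "lambda_path p n = NP p n f / DV p n f"
    using P_min[OF n p] by blast
  obtain m where m: "m \<in> {1..n}" "f m \<noteq> 0" using f(4) by blast
  have m1: "m \<ge> 2" using m f(2) by (cases "m = 1") auto
  have mn: "m < n" using m f(3) by (cases "m = n") auto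
  define g where "g = (\<lambda>k. if k \<le> m then f k else f (k - 1))"
  have NPg: "NP p (Suc n) g = NP p n f"
  proof -
    have "NP p (Suc n) g = (\<Sum>k\<in>{1..<m}. \<bar>g k - g (Suc k)\<bar> powr p) + (\<Sum>k\<in>{m..<Suc n}. \<bar>g k - g (Suc k)\<bar> powr p)"
      unfolding NP_def using m1 mn by (intro sum.atLeastLessThan_concat[symmetric]) auto
    also have "(\<Sum>k\<in>{1..<m}. \<bar>g k - g (Suc k)\<bar> powr p) = (\<Sum>k\<in>{1..<m}. \<bar>f k - f (Suc k)\<bar> powr p)"
      by (rule sum.cong) (auto simp: g_def)
    also have "(\<Sum>k\<in>{m..<Suc n}. \<bar>g k - g (Suc k)\<bar> powr p) = \<bar>g m - g (Suc m)\<bar> powr p + (\<Sum>k\<in>{Suc m..<Suc n}. \<bar>g k - g (Suc k)\<bar> powr p)"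
      using mn by (intro sum.atLeast_Suc_lessThan) auto
    also have "\<bar>g m - g (Suc m)\<bar> powr p = 0" by (simp add: g_def)
    also have "(\<Sum>k\<in>{Suc m..<Suc n}. \<bar>g k - g (Suc k)\<bar> powr p) = (\<Sum>k\<in>{m..<n}. \<bar>g (Suc k) - g (Suc (Suc k))\<bar> powr p)"
      by (rule sum.shift_bounds_Suc_ivl)
    also have "\<dots> = (\<Sum>k\<in>{m..<n}. \<bar>f k - f (Suc k)\<bar> powr p)"
      by (rule sum.cong) (auto simp: g_def)
    also have "(\<Sum>k\<in>{1..<m}. \<bar>f k - f (Suc k)\<bar> powr p) + (0 + (\<Sum>k\<in>{m..<n}. \<bar>f k - f (Suc k)\<bar> powr p)) = NP p n f"
      unfolding NP_def using m1 mn by (simp add: sum.atLeastLessThan_concat)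
    finally show ?thesis .
  qed
  have DVg: "DV p (Suc n) g = DV p n f + \<bar>f m\<bar> powr p"
  proof -
    have "DV p (Suc n) g = (\<Sum>x\<in>{1..<Suc m}. \<bar>g x\<bar> powr p) + (\<Sum>x\<in>{Suc m..<Suc (Suc n)}. \<bar>g x\<bar> powr p)"
      unfolding DV_lt using m1 mn by (intro sum.atLeastLessThan_concat[symmetric]) auto
    also have "(\<Sum>x\<in>{1..<Suc m}. \<bar>g x\<bar> powr p) = (\<Sum>x\<in>{1..<Suc m}. \<bar>f x\<bar> powr p)"
      by (rule sum.cong) (auto simp: g_def)
    also have "(\<Sum>x\<in>{Suc m..<Suc (Suc n)}. \<bar>g x\<bar> powr p) = (\<Sum>x\<in>{m..<Suc n}. \<bar>g (Suc x)\<bar> powr p)"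
      by (rule sum.shift_bounds_Suc_ivl)
    also have "\<dots> = (\<Sum>x\<in>{m..<Suc n}. \<bar>f x\<bar> powr p)"
      by (rule sum.cong) (auto simp: g_def)
    also have "\<dots> = \<bar>f m\<bar> powr p + (\<Sum>x\<in>{Suc m..<Suc n}. \<bar>f x\<bar> powr p)"
      using mn by (intro sum.atLeast_Suc_lessThan) auto
    also have "(\<Sum>x\<in>{1..<Suc m}. \<bar>f x\<bar> powr p) + (\<bar>f m\<bar> powr p + (\<Sum>x\<in>{Suc m..<Suc n}. \<bar>f x\<bar> powr p))
        = DV p n f + \<bar>f m\<bar> powr p"
    proof -
      have "DV p n f = (\<Sum>x\<in>{1..<Suc m}. \<bar>f x\<bar> powr p) + (\<Sum>x\<in>{Suc m..<Suc n}. \<bar>f x\<bar> powr p)"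
        unfolding DV_lt using mn by (intro sum.atLeastLessThan_concat[symmetric]) auto
      thus ?thesis by linarith
    qed
    finally show ?thesis .
  qed
  have g1: "g 1 = 0" using f(2) m1 by (simp add: g_def)
  have gn: "g (Suc n) = 0" using f(3) mn by (simp add: g_def)
  have gne: "\<exists>x\<in>{1..Suc n}. g x \<noteq> 0" using m m1 by (intro bexI[of _ m]) (auto simp: g_def)
  have ub: "lambda_path p (Suc n) \<le> NP p (Suc n) g / DV p (Suc n) g"
    by (rule P_ub) (use n g1 gn gne in auto)
  have Npos: "NP p n f > 0" by (rule NP_pos) (use f in auto)
  have Dpos: "DV p n f > 0" by (rule DV_pos) (use f in auto)
  have cpos: "\<bar>f m\<bar> powr p > 0" using m by simp
  have "NP p n f / (DV p n f + \<bar>f m\<bar> powr p) < NP p n f / DV p n f"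
  proof (rule divide_strict_left_mono)
    show "0 < (DV p n f + \<bar>f m\<bar> powr p) * DV p n f" using Dpos cpos by (intro mult_pos_pos) linarith+
  qed (use Npos cpos in linarith)+
  thus ?thesis using ub NPg DVg f(5) by simp
qed

lemma mediant:
  fixes N1 N2 D1 D2 A B :: real
  assumes "N1 + N2 \<le> A" "D1 + D2 \<ge> B" "A > 0" "B > 0" "N1 \<ge> 0" "N2 \<ge> 0" "D1 \<ge> 0" "D2 \<ge> 0"
    "N1 + N2 < A \<or> D1 + D2 > B"
  shows "(D1 > 0 \<and> N1 / D1 < A / B) \<or> (D2 > 0 \<and> N2 / D2 < A / B)"
proof (rule ccontr)
  assume c: "\<not> ?thesis"
  have i: "N * B \<ge> A * DD" if "DD \<ge> 0" "N \<ge> 0" "\<not> (DD > 0 \<and> N / DD < A / B)" for N DD :: real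
  proof (cases "DD > 0")
    case True
    hence "N / DD \<ge> A / B" using that by auto
    thus ?thesis using True assms(4) by (simp add: field_simps)
  next
    case False
    hence "DD = 0" using that by simp
    thus ?thesis using that assms by simp
  qed
  have 1: "N1 * B \<ge> A * D1" using i[of D1 N1] c assms by auto
  have 2: "N2 * B \<ge> A * D2" using i[of D2 N2] c assms by auto
  have "(N1 + N2) * B \<ge> A * (D1 + D2)" using 1 2 by (simp add: algebra_simps)
  moreover have "(N1 + N2) * B \<le> A * B" using assms by (intro mult_right_mono) auto
  moreover have "A * B \<le> A * (D1 + D2)" using assms by (intro mult_left_mono) auto
  moreover have "(N1 + N2) * B < A * B \<or> A * B < A * (D1 + D2)"
    using assms(9) assms(3,4) by (auto intro: mult_strict_right_mono mult_strict_left_mono)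
  ultimately show False by linarith
qed

definition NT :: "real \<Rightarrow> nat \<Rightarrow> (nat \<Rightarrow> real) \<Rightarrow> real" where
  "NT p n h = NP p n h + \<bar>h 1 - h 3\<bar> powr p"

lemma NT_nonneg: "0 \<le> NT p n h" unfolding NT_def using NP_nonneg[of p n h] by simp

lemma cand:
  assumes n: "n \<ge> 4" and h: "h1 n = 0" "h2 n = 0"
    and "NT p n h1 + NT p n h2 \<le> A" "DV p n h1 + DV p n h2 \<ge> B" "A > 0" "B > 0"
    "NT p n h1 + NT p n h2 < A \<or> DV p n h1 + DV p n h2 > B"
  shows "lambda_tadpole p n 3 < A / B"
proof -
  have "(DV p n h1 > 0 \<and> NT p n h1 / DV p n h1 < A / B) \<or> (DV p n h2 > 0 \<and> NT p n h2 / DV p n h2 < A / B)"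
    by (rule mediant) (use assms NT_nonneg DV_nonneg in auto)
  thus ?thesis
  proof
    assume a: "DV p n h1 > 0 \<and> NT p n h1 / DV p n h1 < A / B"
    have "lambda_tadpole p n 3 \<le> NT p n h1 / DV p n h1" unfolding NT_def
      by (rule T_ub) (use n h a in auto)
    thus ?thesis using a by linarith
  next
    assume a: "DV p n h2 > 0 \<and> NT p n h2 / DV p n h2 < A / B"
    have "lambda_tadpole p n 3 \<le> NT p n h2 / DV p n h2" unfolding NT_def
      by (rule T_ub) (use n h a in auto)
    thus ?thesis using a by linarith
  qed
qed

lemma f2_nz:
  assumes n: "n \<ge> 3" and p: "p > 0" and f: "f 1 = 0" "f (Suc n) = 0" "\<exists>x\<in>{1..Suc n}. f x \<noteq> 0"
    "lambda_path p (Suc n) = NP p (Suc n) f / DV p (Suc n) f"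
  shows "f 2 \<noteq> 0"
proof
  assume f2: "f 2 = 0"
  define g where "g = (\<lambda>k. f (Suc k))"
  have "NP p n g = (\<Sum>k\<in>{Suc 1..<Suc n}. \<bar>f k - f (Suc k)\<bar> powr p)"
    unfolding NP_def g_def by (rule sum.shift_bounds_Suc_ivl[symmetric])
  also have "\<dots> = NP p (Suc n) f"
    unfolding NP_def using n f(1) f2 by (subst sum.atLeast_Suc_lessThan[of 1]) (auto simp: eval_nat_numeral)
  finally have N: "NP p n g = NP p (Suc n) f" .
  have "DV p n g = (\<Sum>k\<in>{Suc 1..Suc n}. \<bar>f k\<bar> powr p)"
    unfolding DV_def g_def by (rule sum.shift_bounds_cl_Suc_ivl[symmetric])
  also have "\<dots> = DV p (Suc n) f"
    unfolding DV_def using n f(1) by (subst sum.atLeast_Suc_atMost[of 1]) auto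
  finally have D: "DV p n g = DV p (Suc n) f" .
  have gne: "\<exists>x\<in>{1..n}. g x \<noteq> 0"
  proof -
    obtain x where x: "x \<in> {1..Suc n}" "f x \<noteq> 0" using f(3) by blast
    hence "x \<ge> 2" using f(1) by (cases "x = 1") auto
    thus ?thesis using x by (intro bexI[of _ "x - 1"]) (auto simp: g_def)
  qed
  have "lambda_path p n \<le> NP p n g / DV p n g"
    by (rule P_ub) (use n f2 f(2) gne in \<open>auto simp: g_def eval_nat_numeral\<close>)
  hence "lambda_path p n \<le> lambda_path p (Suc n)" using N D f(4) by simp
  thus False using part1[OF n p] by simp
qed

lemma NP_split4:
  assumes "n \<ge> 4"
  shows "NP p (Suc n) f = \<bar>f 1 - f 2\<bar> powr p + \<bar>f 2 - f 3\<bar> powr p + \<bar>f 3 - f 4\<bar> powr p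
     + (\<Sum>k\<in>{3..<n}. \<bar>f (Suc k) - f (Suc (Suc k))\<bar> powr p)"
proof -
  have e: "{1..<Suc n} = {1,2,3} \<union> {4..<Suc n}" using assms by auto
  have s: "(\<Sum>k\<in>{4..<Suc n}. \<bar>f k - f (Suc k)\<bar> powr p) = (\<Sum>k\<in>{3..<n}. \<bar>f (Suc k) - f (Suc (Suc k))\<bar> powr p)"
  proof -
    have s4: "(4::nat) = Suc 3" by simp
    show ?thesis unfolding s4 by (rule sum.shift_bounds_Suc_ivl)
  qed
  have "NP p (Suc n) f = (\<Sum>k\<in>{1,2,3}. \<bar>f k - f (Suc k)\<bar> powr p) + (\<Sum>k\<in>{4..<Suc n}. \<bar>f k - f (Suc k)\<bar> powr p)"
    unfolding NP_def e by (rule sum.union_disjoint) auto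
  also have "(\<Sum>k\<in>{1,2,3}. \<bar>f k - f (Suc k)\<bar> powr p) = \<bar>f 1 - f 2\<bar> powr p + \<bar>f 2 - f 3\<bar> powr p + \<bar>f 3 - f 4\<bar> powr p"
    by (simp add: eval_nat_numeral)
  finally show ?thesis unfolding s .
qed

lemma DV_split4:
  assumes "n \<ge> 4"
  shows "DV p (Suc n) f = \<bar>f 1\<bar> powr p + \<bar>f 2\<bar> powr p + \<bar>f 3\<bar> powr p + \<bar>f 4\<bar> powr p
     + (\<Sum>k\<in>{4..n}. \<bar>f (Suc k)\<bar> powr p)"
proof -
  have e: "{1..Suc n} = {1,2,3,4} \<union> {5..Suc n}" using assms by auto
  have s: "(\<Sum>k\<in>{5..Suc n}. \<bar>f k\<bar> powr p) = (\<Sum>k\<in>{4..n}. \<bar>f (Suc k)\<bar> powr p)"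
  proof -
    have s5: "(5::nat) = Suc 4" by simp
    show ?thesis unfolding s5 by (rule sum.shift_bounds_cl_Suc_ivl)
  qed
  have "DV p (Suc n) f = (\<Sum>k\<in>{1,2,3,4}. \<bar>f k\<bar> powr p) + (\<Sum>k\<in>{5..Suc n}. \<bar>f k\<bar> powr p)"
    unfolding DV_def e by (rule sum.union_disjoint) auto
  also have "(\<Sum>k\<in>{1,2,3,4}. \<bar>f k\<bar> powr p) = \<bar>f 1\<bar> powr p + \<bar>f 2\<bar> powr p + \<bar>f 3\<bar> powr p + \<bar>f 4\<bar> powr p"
    by simp
  finally show ?thesis unfolding s .
qed

lemma hR_NT:
  assumes "n \<ge> 4"
  shows "NT p n (\<lambda>k. if k \<le> 3 then f 4 else f (Suc k)) = (\<Sum>k\<in>{3..<n}. \<bar>f (Suc k) - f (Suc (Suc k))\<bar> powr p)"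
proof -
  let ?h = "\<lambda>k::nat. if k \<le> 3 then f 4 else f (Suc k)"
  have e: "{1..<n} = {1,2} \<union> {3..<n}" using assms by auto
  have "NP p n ?h = (\<Sum>k\<in>{1,2}. \<bar>?h k - ?h (Suc k)\<bar> powr p) + (\<Sum>k\<in>{3..<n}. \<bar>?h k - ?h (Suc k)\<bar> powr p)"
    unfolding NP_def e by (rule sum.union_disjoint) auto
  also have "(\<Sum>k\<in>{1,2}. \<bar>?h k - ?h (Suc k)\<bar> powr p) = 0" by (simp add: eval_nat_numeral)
  also have "(\<Sum>k\<in>{3..<n}. \<bar>?h k - ?h (Suc k)\<bar> powr p) = (\<Sum>k\<in>{3..<n}. \<bar>f (Suc k) - f (Suc (Suc k))\<bar> powr p)"
    by (rule sum.cong) (auto simp: eval_nat_numeral)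
  finally show ?thesis unfolding NT_def by simp
qed

lemma hR_DV:
  assumes "n \<ge> 4"
  shows "DV p n (\<lambda>k. if k \<le> 3 then f 4 else f (Suc k)) = 3 * \<bar>f 4\<bar> powr p + (\<Sum>k\<in>{4..n}. \<bar>f (Suc k)\<bar> powr p)"
proof -
  let ?h = "\<lambda>k::nat. if k \<le> 3 then f 4 else f (Suc k)"
  have e: "{1..n} = {1,2,3} \<union> {4..n}" using assms by auto
  have "DV p n ?h = (\<Sum>k\<in>{1,2,3}. \<bar>?h k\<bar> powr p) + (\<Sum>k\<in>{4..n}. \<bar>?h k\<bar> powr p)"
    unfolding DV_def e by (rule sum.union_disjoint) auto
  also have "(\<Sum>k\<in>{1,2,3}. \<bar>?h k\<bar> powr p) = 3 * \<bar>f 4\<bar> powr p" by simp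
  also have "(\<Sum>k\<in>{4..n}. \<bar>?h k\<bar> powr p) = (\<Sum>k\<in>{4..n}. \<bar>f (Suc k)\<bar> powr p)"
    by (rule sum.cong) auto
  finally show ?thesis .
qed

lemma hc_NT:
  assumes "n \<ge> 5"
  shows "NT p n (\<lambda>k. if k = n then 0 else if k = n - 1 then a else c) = \<bar>c - a\<bar> powr p + \<bar>a\<bar> powr p"
proof -
  let ?h = "\<lambda>k::nat. if k = n then 0 else if k = n - 1 then a else c"
  have e: "{1..<n} = {1..<n-2} \<union> {n-2, n-1}" using assms by auto
  have "NP p n ?h = (\<Sum>k\<in>{1..<n-2}. \<bar>?h k - ?h (Suc k)\<bar> powr p) + (\<Sum>k\<in>{n-2,n-1}. \<bar>?h k - ?h (Suc k)\<bar> powr p)"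
    unfolding NP_def e by (rule sum.union_disjoint) auto
  also have "(\<Sum>k\<in>{1..<n-2}. \<bar>?h k - ?h (Suc k)\<bar> powr p) = 0"
    by (rule sum.neutral) auto
  also have "(\<Sum>k\<in>{n-2,n-1}. \<bar>?h k - ?h (Suc k)\<bar> powr p) = \<bar>c - a\<bar> powr p + \<bar>a\<bar> powr p"
  proof -
    have d: "n - 2 \<noteq> n - 1" "n - 2 \<noteq> n" "n - 1 \<noteq> n" using assms by auto
    have s1: "Suc (n-2) = n - 1" "Suc (n - 1) = n" using assms by auto
    show ?thesis using d assms by (simp add: s1)
  qed
  finally have np: "NP p n ?h = \<bar>c - a\<bar> powr p + \<bar>a\<bar> powr p" by simp
  have "?h 1 = c" "?h 3 = c" using assms by auto
  thus ?thesis unfolding NT_def np by simp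
qed

lemma hc_DV:
  assumes "n \<ge> 5"
  shows "DV p n (\<lambda>k. if k = n then 0 else if k = n - 1 then a else c) = real (n - 2) * \<bar>c\<bar> powr p + \<bar>a\<bar> powr p"
proof -
  let ?h = "\<lambda>k::nat. if k = n then 0 else if k = n - 1 then a else c"
  have e: "{1..n} = {1..n-2} \<union> {n-1, n}" using assms by auto
  have "DV p n ?h = (\<Sum>k\<in>{1..n-2}. \<bar>?h k\<bar> powr p) + (\<Sum>k\<in>{n-1,n}. \<bar>?h k\<bar> powr p)"
    unfolding DV_def e by (rule sum.union_disjoint) auto
  also have "(\<Sum>k\<in>{1..n-2}. \<bar>?h k\<bar> powr p) = (\<Sum>k\<in>{1..n-2}. \<bar>c\<bar> powr p)"
    by (rule sum.cong) auto
  also have "\<dots> = real (n - 2) * \<bar>c\<bar> powr p" by simp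
  also have "(\<Sum>k\<in>{n-1,n}. \<bar>?h k\<bar> powr p) = \<bar>a\<bar> powr p"
    using assms by simp
  finally show ?thesis .
qed

lemma part2_ge5:
  assumes n: "n \<ge> 5" and p: "p > 0"
  shows "lambda_tadpole p n 3 < lambda_path p (Suc n)"
proof -
  have n3: "Suc n \<ge> 3" using n by simp
  obtain f where f: "\<forall>x. 0 \<le> f x" "f 1 = 0" "f (Suc n) = 0" "\<exists>x\<in>{1..Suc n}. f x \<noteq> 0"
    "lambda_path p (Suc n) = NP p (Suc n) f / DV p (Suc n) f"
    using P_min[OF n3 p] by blast
  have f2: "f 2 \<noteq> 0" by (rule f2_nz[of n p f]) (use n p f in auto)
  define S where "S = (\<Sum>k\<in>{3..<n}. \<bar>f (Suc k) - f (Suc (Suc k))\<bar> powr p)"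
  define Q where "Q = (\<Sum>k\<in>{4..n}. \<bar>f (Suc k)\<bar> powr p)"
  have N: "NP p (Suc n) f = \<bar>f 2\<bar> powr p + \<bar>f 2 - f 3\<bar> powr p + \<bar>f 3 - f 4\<bar> powr p + S"
    using NP_split4[of n p f] n f(2) unfolding S_def by simp
  have D: "DV p (Suc n) f = \<bar>f 2\<bar> powr p + \<bar>f 3\<bar> powr p + \<bar>f 4\<bar> powr p + Q"
    using DV_split4[of n p f] n f(2) unfolding Q_def by simp
  have Npos: "NP p (Suc n) f > 0" by (rule NP_pos) (use f in auto)
  have Dpos: "DV p (Suc n) f > 0" by (rule DV_pos) (use f in auto)
  define hR where "hR = (\<lambda>k::nat. if k \<le> 3 then f 4 else f (Suc k))"
  have hRN: "NT p n hR = S" unfolding hR_def S_def by (rule hR_NT) (use n in auto)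
  have hRD: "DV p n hR = 3 * \<bar>f 4\<bar> powr p + Q" unfolding hR_def Q_def by (rule hR_DV) (use n in auto)
  have hRn: "hR n = 0" using n f(3) by (simp add: hR_def)
  have S0: "S \<ge> 0" unfolding S_def by (intro sum_nonneg) auto
  have Q0: "Q \<ge> 0" unfolding Q_def by (intro sum_nonneg) auto
  have rn: "real (n - 2) \<ge> 3" using n by simp
  have n4: "n \<ge> 4" using n by simp
  show ?thesis
  proof (cases "f 3 \<noteq> 0 \<or> f 4 \<noteq> 0")
    case True
    define hL where "hL = (\<lambda>k. if k = n then 0 else if k = n - 1 then f 2 else f 3)"
    have hLN: "NT p n hL = \<bar>f 3 - f 2\<bar> powr p + \<bar>f 2\<bar> powr p" unfolding hL_def by (rule hc_NT[OF n])
    have hLD: "DV p n hL = real (n - 2) * \<bar>f 3\<bar> powr p + \<bar>f 2\<bar> powr p" unfolding hL_def by (rule hc_DV[OF n])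
    have hLn: "hL n = 0" by (simp add: hL_def)
    have c: "\<bar>f 3 - f 2\<bar> = \<bar>f 2 - f 3\<bar>" by (rule abs_minus_commute)
    have x: "real (n - 2) * \<bar>f 3\<bar> powr p \<ge> 3 * \<bar>f 3\<bar> powr p"
      using rn by (intro mult_right_mono) auto
    have ineq: "(real (n - 2) * \<bar>f 3\<bar> powr p + 3 * \<bar>f 4\<bar> powr p) > \<bar>f 3\<bar> powr p + \<bar>f 4\<bar> powr p"
    proof (cases "f 3 \<noteq> 0")
      case True
      hence "\<bar>f 3\<bar> powr p > 0" by simp
      then show ?thesis using x powr_ge_zero[of "\<bar>f 4\<bar>" p] by linarith
    next
      case False
      hence "\<bar>f 4\<bar> powr p > 0" using \<open>f 3 \<noteq> 0 \<or> f 4 \<noteq> 0\<close> by simp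
      then show ?thesis using x powr_ge_zero[of "\<bar>f 3\<bar>" p] by linarith
    qed
    show ?thesis unfolding f(5)
    proof (rule cand[where ?h1.0=hL and ?h2.0=hR and p=p and n=n])
      show "4 \<le> n" "hL n = 0" "hR n = 0" using n4 hLn hRn by auto
      show "NT p n hL + NT p n hR \<le> NP p (Suc n) f"
        unfolding hLN hRN N c using powr_ge_zero[of "\<bar>f 3 - f 4\<bar>" p] by linarith
      show "DV p (Suc n) f \<le> DV p n hL + DV p n hR"
        unfolding hLD hRD D using ineq by linarith
      show "NT p n hL + NT p n hR < NP p (Suc n) f \<or> DV p (Suc n) f < DV p n hL + DV p n hR"
        unfolding hLD hRD D using ineq by linarith
    qed (use Npos Dpos in auto)
  next
    case False
    hence f34: "f 3 = 0" "f 4 = 0" by auto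
    define hA where "hA = (\<lambda>k. if k = n then 0 else if k = n - 1 then f 2 else f 2)"
    have hAN: "NT p n hA = \<bar>f 2 - f 2\<bar> powr p + \<bar>f 2\<bar> powr p" unfolding hA_def by (rule hc_NT[OF n])
    have hAD: "DV p n hA = real (n - 2) * \<bar>f 2\<bar> powr p + \<bar>f 2\<bar> powr p" unfolding hA_def by (rule hc_DV[OF n])
    have hAn: "hA n = 0" by (simp add: hA_def)
    have pos2: "\<bar>f 2\<bar> powr p > 0" using f2 by simp
    have x: "real (n - 2) * \<bar>f 2\<bar> powr p \<ge> 0" by simp
    show ?thesis unfolding f(5)
    proof (rule cand[where ?h1.0=hA and ?h2.0=hR and p=p and n=n])
      show "4 \<le> n" "hA n = 0" "hR n = 0" using n4 hAn hRn by auto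
      show "NT p n hA + NT p n hR \<le> NP p (Suc n) f"
        unfolding hAN hRN N f34 using pos2 by simp
      show "DV p (Suc n) f \<le> DV p n hA + DV p n hR"
        unfolding hAD hRD D f34 using x by simp
      show "NT p n hA + NT p n hR < NP p (Suc n) f \<or> DV p (Suc n) f < DV p n hA + DV p n hR"
        unfolding hAN hRN N f34 using pos2 by simp
    qed (use Npos Dpos in auto)
  qed
qed

lemma superadd:
  fixes x y p :: real
  assumes "0 \<le> x" "0 \<le> y" "1 \<le> p"
  shows "x powr p + y powr p \<le> (x + y) powr p"
proof (cases "x = 0 \<or> y = 0")
  case True then show ?thesis using assms by auto
next
  case False
  hence xy: "x > 0" "y > 0" using assms by auto
  have e: "z powr p = z * z powr (p - 1)" if "z > 0" for z :: real
  proof -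
    have "z powr p = z powr (1 + (p - 1))" by simp
    also have "\<dots> = z powr 1 * z powr (p - 1)" by (rule powr_add)
    finally show ?thesis using that by simp
  qed
  have "x powr (p - 1) \<le> (x + y) powr (p - 1)" using assms xy by (intro powr_mono2) auto
  hence 1: "x * x powr (p - 1) \<le> x * (x + y) powr (p - 1)" using xy by (intro mult_left_mono) auto
  have "y powr (p - 1) \<le> (x + y) powr (p - 1)" using assms xy by (intro powr_mono2) auto
  hence 2: "y * y powr (p - 1) \<le> y * (x + y) powr (p - 1)" using xy by (intro mult_left_mono) auto
  have "x powr p + y powr p \<le> x * (x + y) powr (p - 1) + y * (x + y) powr (p - 1)"
    using 1 2 e[OF xy(1)] e[OF xy(2)] by linarith
  also have "\<dots> = (x + y) * (x + y) powr (p - 1)" by (simp add: algebra_simps)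
  also have "\<dots> = (x + y) powr p" using e[of "x + y"] xy by simp
  finally show ?thesis .
qed

lemma cand4_NT: "NT p 4 (\<lambda>k. if k \<le> 2 then u else if k = 3 then v else 0) = 2 * \<bar>u - v\<bar> powr p + \<bar>v\<bar> powr p"
proof -
  have e: "{1..<4::nat} = {1,2,3}" by auto
  show ?thesis unfolding NT_def NP_def e by (simp add: eval_nat_numeral abs_minus_commute)
qed

lemma cand4_DV: "DV p 4 (\<lambda>k. if k \<le> 2 then u else if k = 3 then v else 0) = 2 * \<bar>u\<bar> powr p + \<bar>v\<bar> powr p"
proof -
  have e: "{1..4::nat} = {1,2,3,4}" by auto
  show ?thesis unfolding DV_def e by (simp add: eval_nat_numeral)
qed

lemma part2_4:
  assumes p: "p > 1"
  shows "lambda_tadpole p 4 3 < lambda_path p (Suc 4)"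
proof -
  have p0: "p > 0" using p by simp
  have n3: "Suc 4 \<ge> 3" by simp
  obtain f where f: "\<forall>x. 0 \<le> f x" "f 1 = 0" "f (Suc 4) = 0" "\<exists>x\<in>{1..Suc 4}. f x \<noteq> 0"
    "lambda_path p (Suc 4) = NP p (Suc 4) f / DV p (Suc 4) f"
    using P_min[OF n3 p0] by blast
  define a where "a = f 2"
  define b where "b = f 3"
  define c where "c = f 4"
  have a0: "a \<ge> 0" and b0: "b \<ge> 0" and c0: "c \<ge> 0" using f(1) by (auto simp: a_def b_def c_def)
  have nz: "a \<noteq> 0 \<or> b \<noteq> 0 \<or> c \<noteq> 0"
  proof -
    obtain x where x: "x \<in> {1..Suc 4}" "f x \<noteq> 0" using f(4) by blast
    hence "x = 2 \<or> x = 3 \<or> x = 4" using f(2,3) by (auto simp: eval_nat_numeral le_Suc_eq)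
    thus ?thesis using x by (auto simp: a_def b_def c_def)
  qed
  have N: "NP p (Suc 4) f = a powr p + \<bar>a - b\<bar> powr p + \<bar>b - c\<bar> powr p + c powr p"
  proof -
    have "{3..<4::nat} = {3}" by auto
    thus ?thesis using NP_split4[of 4 p f] f(2,3) a0 c0 by (simp add: a_def b_def c_def)
  qed
  have D: "DV p (Suc 4) f = a powr p + b powr p + c powr p"
  proof -
    have "{4..4::nat} = {4}" by auto
    thus ?thesis using DV_split4[of 4 p f] f(2,3) a0 b0 c0 by (simp add: a_def b_def c_def)
  qed
  have Npos: "NP p (Suc 4) f > 0" by (rule NP_pos) (use f in auto)
  have Dpos: "DV p (Suc 4) f > 0" by (rule DV_pos) (use f in auto)
  define h where "h = (\<lambda>u v. (\<lambda>k::nat. if k \<le> 2 then u else if k = 3 then v else (0::real)))"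
  have hN: "NT p 4 (h u v) = 2 * \<bar>u - v\<bar> powr p + \<bar>v\<bar> powr p" for u v unfolding h_def by (rule cand4_NT)
  have hD: "DV p 4 (h u v) = 2 * \<bar>u\<bar> powr p + \<bar>v\<bar> powr p" for u v unfolding h_def by (rule cand4_DV)
  have h4: "h u v 4 = 0" for u v by (simp add: h_def)
  have n4: "(4::nat) \<le> 4" by simp
  have pa: "a powr p \<ge> 0" "b powr p \<ge> 0" "c powr p \<ge> 0" "\<bar>a - b\<bar> powr p \<ge> 0" "\<bar>b - c\<bar> powr p \<ge> 0" by auto
  have cm: "\<bar>b - a\<bar> = \<bar>a - b\<bar>" "\<bar>c - b\<bar> = \<bar>b - c\<bar>" by (auto simp: abs_minus_commute)
  consider (B) "a \<le> b" "c \<le> b" | (A) "b \<le> a" "c \<le> a" | (C) "a \<le> c" "b \<le> c" by linarith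
  then have "lambda_tadpole p 4 3 < NP p (Suc 4) f / DV p (Suc 4) f"
  proof cases
    case B
    have ab: "a powr p \<le> b powr p" using B a0 p0 by (intro powr_mono2) auto
    have cb: "c powr p \<le> b powr p" using B c0 p0 by (intro powr_mono2) auto
    have "lambda_tadpole p 4 3 < (2 * NP p (Suc 4) f) / (2 * DV p (Suc 4) f)"
    proof (rule cand[where ?h1.0="h b a" and ?h2.0="h b c" and p=p and n=4])
      show "4 \<le> (4::nat)" "h b a 4 = 0" "h b c 4 = 0" using h4 by auto
      show "NT p 4 (h b a) + NT p 4 (h b c) \<le> 2 * NP p (Suc 4) f"
        unfolding hN N cm using a0 b0 c0 pa by simp
      show "2 * DV p (Suc 4) f \<le> DV p 4 (h b a) + DV p 4 (h b c)"
        unfolding hD D using a0 b0 c0 ab cb by simp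
      show "NT p 4 (h b a) + NT p 4 (h b c) < 2 * NP p (Suc 4) f \<or> 2 * DV p (Suc 4) f < DV p 4 (h b a) + DV p 4 (h b c)"
      proof (cases "a = 0 \<and> c = 0")
        case True
        hence "b > 0" using nz b0 by auto
        hence "b powr p > 0" by simp
        thus ?thesis unfolding hD D using True a0 b0 c0 p0 by simp
      next
        case False
        hence "a powr p + c powr p > 0" using a0 c0 pa by (auto simp: add_pos_nonneg add_nonneg_pos)
        thus ?thesis unfolding hN N cm using a0 b0 c0 by simp
      qed
    qed (use Npos Dpos in auto)
    thus ?thesis by simp
  next
    case A
    have sa: "\<bar>a - b\<bar> powr p + b powr p \<le> a powr p"
      using superadd[of "a - b" b p] A b0 p by simp
    have ca: "c powr p \<le> a powr p" using A c0 p0 by (intro powr_mono2) auto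
    have "lambda_tadpole p 4 3 < NP p (Suc 4) f / DV p (Suc 4) f"
    proof (rule cand[where ?h1.0="h a b" and ?h2.0="h 0 0" and p=p and n=4])
      show "4 \<le> (4::nat)" "h a b 4 = 0" "h 0 0 4 = 0" using h4 by auto
      show "NT p 4 (h a b) + NT p 4 (h 0 0) \<le> NP p (Suc 4) f"
        unfolding hN N using a0 b0 c0 p0 by simp (use pa sa in linarith)
      show "DV p (Suc 4) f \<le> DV p 4 (h a b) + DV p 4 (h 0 0)"
        unfolding hD D using a0 b0 c0 ca p0 by simp
      show "NT p 4 (h a b) + NT p 4 (h 0 0) < NP p (Suc 4) f \<or> DV p (Suc 4) f < DV p 4 (h a b) + DV p 4 (h 0 0)"
      proof (cases "c = 0")
        case True
        hence "a > 0" using nz A a0 b0 by auto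
        hence "a powr p > 0" by simp
        thus ?thesis unfolding hD D using True a0 b0 c0 p0 by simp
      next
        case False
        hence cp: "c powr p > 0" using c0 by simp
        show ?thesis unfolding hN N using a0 b0 c0 p0 by (intro disjI1) (simp, use pa sa cp in linarith)
      qed
    qed (use Npos Dpos in auto)
    thus ?thesis by simp
  next
    case C
    have sc: "\<bar>b - c\<bar> powr p + b powr p \<le> c powr p"
      using superadd[of "c - b" b p] C b0 p by (simp add: abs_minus_commute)
    have ac: "a powr p \<le> c powr p" using C a0 p0 by (intro powr_mono2) auto
    have "lambda_tadpole p 4 3 < NP p (Suc 4) f / DV p (Suc 4) f"
    proof (rule cand[where ?h1.0="h c b" and ?h2.0="h 0 0" and p=p and n=4])
      show "4 \<le> (4::nat)" "h c b 4 = 0" "h 0 0 4 = 0" using h4 by auto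
      show "NT p 4 (h c b) + NT p 4 (h 0 0) \<le> NP p (Suc 4) f"
        unfolding hN N cm using a0 b0 c0 p0 by simp (use pa sc in linarith)
      show "DV p (Suc 4) f \<le> DV p 4 (h c b) + DV p 4 (h 0 0)"
        unfolding hD D using a0 b0 c0 ac p0 by simp
      show "NT p 4 (h c b) + NT p 4 (h 0 0) < NP p (Suc 4) f \<or> DV p (Suc 4) f < DV p 4 (h c b) + DV p 4 (h 0 0)"
      proof (cases "a = 0")
        case True
        hence "c > 0" using nz C c0 b0 by auto
        hence "c powr p > 0" by simp
        thus ?thesis unfolding hD D using True a0 b0 c0 p0 by simp
      next
        case False
        hence ap: "a powr p > 0" using a0 by simp
        show ?thesis unfolding hN N cm using a0 b0 c0 p0 by (intro disjI1) (simp, use pa sc ap in linarith)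
      qed
    qed (use Npos Dpos in auto)
    thus ?thesis by simp
  qed
  thus ?thesis using f(5) by simp
qed

theorem lemma2p4:
  fixes n :: nat and p :: real
  assumes "n \<ge> 4" and "p > 1"
  shows "lambda_path p n > lambda_path p (n + 1) \<and>
         lambda_path p (n + 1) > lambda_tadpole p n 3"
proof
  have n3: "n \<ge> 3" and p0: "p > 0" using assms by auto
  show "lambda_path p n > lambda_path p (n + 1)" using part1[OF n3 p0] by simp
  show "lambda_path p (n + 1) > lambda_tadpole p n 3"
  proof (cases "n = 4")
    case True
    then show ?thesis using part2_4[OF assms(2)] by simp
  next
    case False
    hence "n \<ge> 5" using assms by simp
    then show ?thesis using part2_ge5[OF _ p0] by simp
  qed
qed

end
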